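(* In the construction described in the context, the set $L_\infty:=\bigcup_{k\in\mathbb{N}}i_k(L_k)$ is dense in $(P_\infty,\rho_\infty)$.
   Context: Construction. Let $(e_n)$ be the canonical basis of $\ell^1(\mathbb{N})$; $\alpha(t)=t$ on $[0,\frac12]$, $\alpha(t)=1-t$ on $[\frac12,1]$; $S_n=\{te_1+\alpha(t)e_{n+1}:t\in[0,1]\}$; $x_n=(\frac12-\frac1{2^n})e_1$, $x_\infty=\frac12e_1$; $Y=\bigcup_{n\ge1}(2^{-(n+1)}S_n+x_n)\cup\{x_\infty\}$ with the $\ell^1$ metric $\theta$. $Y$ is the image of an arc-length parametrized injective curve $\gamma:[0,1]\to Y$ with $\gamma(0)=0$, $\gamma(1)=x_\infty$. For $r>0$ let $\theta_r(s,t)=r\,\theta(\gamma(s/r),\gamma(t/r))$ on $[0,r]$. Set $P_1=[0,1]$, $\rho_1=\theta_1$, $L_1=\{1\}$. Given $(P_k,\rho_k)$ with $P_k\subset[0,1]^k$ and $L_k\subset P_k$, let $\pi_k$ denote the $k$-th coordinate, choose a countable dense subset $Q_k=\{q_n:n\in\mathbb{N}\}$ (distinct $q_n$) of $P_k\setminus L_k$ with $\pi_k$ injective on $Q_k$ and $0\notin\pi_k(Q_k)$, set $r_n=2^{-(n+k)}$, $d_n=\theta_{r_n}$, and let $P_{k+1}=\{(x,0):x\in P_k\setminus Q_k\}\cup\{(q_n,y):n\in\mathbb{N},y\in[0,r_n]\}\subset[0,1]^{k+1}$ with metric $\rho_{k+1}((x_1,y_1),(x_2,y_2))$ equal to $d_n(y_1,y_2)$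 if $x_1=x_2=q_n$; $d_n(y_1,0)+\rho_k(x_1,x_2)+d_m(0,y_2)$ if $x_1=q_n,x_2=q_m$, $n\ne m$; $d_n(y_1,0)+\rho_k(x_1,x_2)$ if $x_1=q_n$, $x_2\notin Q_k$ (and symmetrically); $\rho_k(x_1,x_2)$ if $x_1,x_2\notin Q_k$. Let $L_{k+1}=(L_k\times\{0\})\cup\{(q_n,r_n):n\in\mathbb{N}\}$. Let $i_k:P_k\to[0,1]^{\mathbb{N}}$, $i_k(x)=(x_1,\dots,x_k,0,0,\dots)$; $\mathcal P_\infty=\bigcup_k i_k(P_k)$ with the metric $\rho_\infty(x,y)=\rho_k(i_k^{-1}x,i_k^{-1}y)$ for $x,y\in i_k(P_k)$; $(P_\infty,\rho_\infty)$ is the completion of $(\mathcal P_\infty,\rho_\infty)$. *)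

theory Defs
  imports "HOL-Analysis.Analysis"
begin

section \<open>The space l1(N), modelled as nat => real (coordinate 0 unused)\<close>

definition e :: "nat \<Rightarrow> nat \<Rightarrow> real" where
  "e n = (\<lambda>i. if i = n then 1 else 0)"

definition theta :: "(nat \<Rightarrow> real) \<Rightarrow> (nat \<Rightarrow> real) \<Rightarrow> real" where
  "theta x y = (\<Sum>i. \<bar>x i - y i\<bar>)"

definition alpha :: "real \<Rightarrow> real" where
  "alpha t = (if t \<le> 1/2 then t else 1 - t)"

definition Sseg :: "nat \<Rightarrow> (nat \<Rightarrow> real) set" where
  "Sseg n = {(\<lambda>i. t * e 1 i + alpha t * e (Suc n) i) | t. t \<in> {0..1}}"

definition xpt :: "nat \<Rightarrow> nat \<Rightarrow> real" where
  "xpt n = (\<lambda>i. (1/2 - 1/2^n) * e 1 i)"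

definition xinf :: "nat \<Rightarrow> real" where
  "xinf = (\<lambda>i. (1/2) * e 1 i)"

definition Ycurve :: "(nat \<Rightarrow> real) set" where
  "Ycurve = (\<Union>n\<in>{1::nat..}. (\<lambda>p i. (1/2)^(n+1) * p i + xpt n i) ` Sseg n) \<union> {xinf}"

definition curve_length :: "('a \<Rightarrow> 'a \<Rightarrow> real) \<Rightarrow> (real \<Rightarrow> 'a) \<Rightarrow> real \<Rightarrow> real \<Rightarrow> ereal" where
  "curve_length d g a b =
     (SUP (m, p) \<in> {(m, p). p 0 = a \<and> p m = b \<and> (\<forall>i<m. p i \<le> p (Suc i))}.
        ereal (\<Sum>i<m. d (g (p i)) (g (p (Suc i)))))"

definition arc_length_param :: "('a \<Rightarrow> 'a \<Rightarrow> real) \<Rightarrow> (real \<Rightarrow> 'a) \<Rightarrow> bool" where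
  "arc_length_param d g \<longleftrightarrow>
     (\<forall>s t. 0 \<le> s \<and> s \<le> t \<and> t \<le> 1 \<longrightarrow> curve_length d g s t = ereal (t - s))"

definition admissible_curve :: "(real \<Rightarrow> nat \<Rightarrow> real) \<Rightarrow> bool" where
  "admissible_curve g \<longleftrightarrow>
     g ` {0..1} = Ycurve \<and> inj_on g {0..1} \<and> g 0 = (\<lambda>i. 0) \<and> g 1 = xinf \<and>
     arc_length_param theta g"

definition theta_r :: "(real \<Rightarrow> nat \<Rightarrow> real) \<Rightarrow> real \<Rightarrow> real \<Rightarrow> real \<Rightarrow> real" where
  "theta_r g r s t = r * theta (g (s / r)) (g (t / r))"

definition rad :: "nat \<Rightarrow> nat \<Rightarrow> real" where
  "rad k n = (1/2) ^ (n + k)"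

text \<open>Points of [0,1]^k are lists of length k; embed = i_k.\<close>
definition embed :: "real list \<Rightarrow> nat \<Rightarrow> real" where
  "embed x = (\<lambda>j. if j < length x then x ! j else 0)"

text \<open>The inductive construction, with the choices q k n (n >= 1) of the dense sets Q_k
  as parameters. pi_k (k-th coordinate) is x ! (k-1).\<close>
definition construction ::
  "(real \<Rightarrow> nat \<Rightarrow> real) \<Rightarrow> (nat \<Rightarrow> real list set) \<Rightarrow> (nat \<Rightarrow> real list \<Rightarrow> real list \<Rightarrow> real)
    \<Rightarrow> (nat \<Rightarrow> real list set) \<Rightarrow> (nat \<Rightarrow> nat \<Rightarrow> real list) \<Rightarrow> bool" where
  "construction g P \<rho> L q \<longleftrightarrow>
     P 1 = {[t] | t. t \<in> {0..1}} \<and>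
     (\<forall>s\<in>{0..1}. \<forall>t\<in>{0..1}. \<rho> 1 [s] [t] = theta_r g 1 s t) \<and>
     L 1 = {[1]} \<and>
     (\<forall>k\<ge>1.
        inj_on (q k) {1..} \<and>
        q k ` {1..} \<subseteq> P k - L k \<and>
        (\<forall>x\<in>P k - L k. \<forall>\<epsilon>>0. \<exists>n\<ge>1. \<rho> k x (q k n) < \<epsilon>) \<and>
        inj_on (\<lambda>x. x ! (k - 1)) (q k ` {1..}) \<and>
        (\<forall>n\<ge>1. q k n ! (k - 1) \<noteq> 0) \<and>
        P (Suc k) = {x @ [0] | x. x \<in> P k - q k ` {1..}}
                    \<union> {q k n @ [y] | n y. n \<ge> 1 \<and> y \<in> {0..rad k n}} \<and>
        (\<forall>n\<ge>1. \<forall>m\<ge>1. \<forall>y1\<in>{0..rad k n}. \<forall>y2\<in>{0..rad k m}.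
           \<rho> (Suc k) (q k n @ [y1]) (q k m @ [y2]) =
             (if n = m then theta_r g (rad k n) y1 y2
              else theta_r g (rad k n) y1 0 + \<rho> k (q k n) (q k m) + theta_r g (rad k m) 0 y2)) \<and>
        (\<forall>n\<ge>1. \<forall>y1\<in>{0..rad k n}. \<forall>x\<in>P k - q k ` {1..}.
           \<rho> (Suc k) (q k n @ [y1]) (x @ [0]) = theta_r g (rad k n) y1 0 + \<rho> k (q k n) x \<and>
           \<rho> (Suc k) (x @ [0]) (q k n @ [y1]) = \<rho> k x (q k n) + theta_r g (rad k n) 0 y1) \<and>
        (\<forall>x1\<in>P k - q k ` {1..}. \<forall>x2\<in>P k - q k ` {1..}.
           \<rho> (Suc k) (x1 @ [0]) (x2 @ [0]) = \<rho> k x1 x2) \<and>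
        L (Suc k) = {x @ [0] | x. x \<in> L k} \<union> {q k n @ [rad k n] | n. n \<ge> 1})"

definition Pcal_inf :: "(nat \<Rightarrow> real list set) \<Rightarrow> (nat \<Rightarrow> real) set" where
  "Pcal_inf P = (\<Union>k\<in>{1..}. embed ` P k)"

definition L_inf :: "(nat \<Rightarrow> real list set) \<Rightarrow> (nat \<Rightarrow> real) set" where
  "L_inf L = (\<Union>k\<in>{1..}. embed ` L k)"

text \<open>(C,dC) with j is a completion of (curly-P_inf, rho_inf): complete metric space,
  j isometric for rho_inf (rho_inf(i_k a, i_k b) = rho_k(a,b)), with dense image.\<close>
definition is_completion ::
  "(nat \<Rightarrow> real list set) \<Rightarrow> (nat \<Rightarrow> real list \<Rightarrow> real list \<Rightarrow> real)
    \<Rightarrow> 'c set \<Rightarrow> ('c \<Rightarrow> 'c \<Rightarrow> real) \<Rightarrow> ((nat \<Rightarrow> real) \<Rightarrow> 'c) \<Rightarrow> bool" where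
  "is_completion P \<rho> C dC j \<longleftrightarrow>
     Metric_space C dC \<and> Metric_space.mcomplete C dC \<and>
     j ` Pcal_inf P \<subseteq> C \<and>
     (\<forall>k\<ge>1. \<forall>a\<in>P k. \<forall>b\<in>P k. dC (j (embed a)) (j (embed b)) = \<rho> k a b) \<and>
     (Metric_space.mtopology C dC) closure_of (j ` Pcal_inf P) = C"

end

theory Submission
  imports Defs
begin

lemma embed_snoc0: "embed (x @ [0]) = embed x"
  unfolding embed_def by (auto simp: nth_append fun_eq_iff)

lemma theta_zero_xinf: "theta (\<lambda>i. 0) xinf = 1/2"
proof -
  have "(\<lambda>i. \<bar>(0::real) - xinf i\<bar>) = (\<lambda>i. if i = 1 then 1/2 else 0)"
    by (auto simp: xinf_def e_def fun_eq_iff)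
  moreover have "(\<Sum>i. (if i = (1::nat) then (1/2::real) else 0)) = 1/2"
    using sums_single[of 1 "\<lambda>_. (1/2::real)"] sums_unique by fastforce
  ultimately show ?thesis unfolding theta_def by simp
qed

lemma constr_step:
  assumes "construction g P \<rho> L q" "k \<ge> 1"
  shows "inj_on (q k) {1..} \<and>
        q k ` {1..} \<subseteq> P k - L k \<and>
        (\<forall>x\<in>P k - L k. \<forall>\<epsilon>>0. \<exists>n\<ge>1. \<rho> k x (q k n) < \<epsilon>) \<and>
        inj_on (\<lambda>x. x ! (k - 1)) (q k ` {1..}) \<and>
        (\<forall>n\<ge>1. q k n ! (k - 1) \<noteq> 0) \<and>
        P (Suc k) = {x @ [0] | x. x \<in> P k - q k ` {1..}}
                    \<union> {q k n @ [y] | n y. n \<ge> 1 \<and> y \<in> {0..rad k n}} \<and>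
        (\<forall>n\<ge>1. \<forall>m\<ge>1. \<forall>y1\<in>{0..rad k n}. \<forall>y2\<in>{0..rad k m}.
           \<rho> (Suc k) (q k n @ [y1]) (q k m @ [y2]) =
             (if n = m then theta_r g (rad k n) y1 y2
              else theta_r g (rad k n) y1 0 + \<rho> k (q k n) (q k m) + theta_r g (rad k m) 0 y2)) \<and>
        (\<forall>n\<ge>1. \<forall>y1\<in>{0..rad k n}. \<forall>x\<in>P k - q k ` {1..}.
           \<rho> (Suc k) (q k n @ [y1]) (x @ [0]) = theta_r g (rad k n) y1 0 + \<rho> k (q k n) x \<and>
           \<rho> (Suc k) (x @ [0]) (q k n @ [y1]) = \<rho> k x (q k n) + theta_r g (rad k n) 0 y1) \<and>
        (\<forall>x1\<in>P k - q k ` {1..}. \<forall>x2\<in>P k - q k ` {1..}.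
           \<rho> (Suc k) (x1 @ [0]) (x2 @ [0]) = \<rho> k x1 x2) \<and>
        L (Suc k) = {x @ [0] | x. x \<in> L k} \<union> {q k n @ [rad k n] | n. n \<ge> 1}"
  using assms(1) unfolding construction_def
  apply (elim conjE)
  apply (drule spec[of _ k])
  using assms(2) by (elim impE) 

lemma constr_base1:
  assumes "construction g P \<rho> L q"
  shows "L 1 = {[1]}"
  using assms unfolding construction_def by (elim conjE) assumption

lemma constr_base2:
  assumes "construction g P \<rho> L q"
  shows "P 1 = {[t] | t. t \<in> {0..1}}"
  using assms unfolding construction_def by (elim conjE) assumption

lemma L_sub_P:
  assumes c: "construction g P \<rho> L q" and k: "k \<ge> 1"
  shows "L k \<subseteq> P k"
  using k
proof (induction k rule: dec_induct)
  case base
  then show ?case using constr_base1[OF c] constr_base2[OF c] by auto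
next
  case (step k)
  have A: "q k ` {1..} \<subseteq> P k - L k"
    using constr_step[OF c step(1)] by (elim conjE) assumption
  have Pk: "P (Suc k) = {x @ [0] | x. x \<in> P k - q k ` {1..}}
                    \<union> {q k n @ [y] | n y. n \<ge> 1 \<and> y \<in> {0..rad k n}}"
    using constr_step[OF c step(1)] by (elim conjE) assumption
  have Lk: "L (Suc k) = {x @ [0] | x. x \<in> L k} \<union> {q k n @ [rad k n] | n. n \<ge> 1}"
    using constr_step[OF c step(1)] by (elim conjE) assumption

  show ?case
  proof
    fix z assume "z \<in> L (Suc k)"
    then have "(\<exists>x. z = x @ [0] \<and> x \<in> L k) \<or> (\<exists>n. z = q k n @ [rad k n] \<and> n \<ge> 1)"
      unfolding Lk by (simp only: Un_iff mem_Collect_eq)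
    then show "z \<in> P (Suc k)"
    proof
      assume "\<exists>x. z = x @ [0] \<and> x \<in> L k"
      then obtain x where x: "z = x @ [0]" "x \<in> L k" by blast
      have "x \<in> P k - q k ` {1..}" using x(2) step(3) A by auto
      then show ?thesis unfolding Pk x(1) by (intro UnI1 CollectI) (rule exI[of _ x], rule conjI[OF refl])
    next
      assume "\<exists>n. z = q k n @ [rad k n] \<and> n \<ge> 1"
      then obtain n where n: "z = q k n @ [rad k n]" "n \<ge> 1" by blast
      have "rad k n \<in> {0..rad k n}" unfolding rad_def by simp
      then show ?thesis unfolding Pk n(1) using n(2)
        by (intro UnI2 CollectI) (rule exI[of _ n], rule exI[of _ "rad k n"], simp)
    qed
  qed
qed

lemma lift:
  assumes c: "construction g P \<rho> L q" and k: "k \<ge> 1" and m: "m \<ge> k"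
    and x: "x \<in> P k - L k"
  shows "\<exists>x' \<in> P m - L m. embed x' = embed x"
  using m
proof (induction m rule: dec_induct)
  case base
  then show ?case using x by blast
next
  case (step m)
  then obtain x' where x': "x' \<in> P m - L m" "embed x' = embed x" by blast
  have m1: "m \<ge> 1" using step k by simp
  have Pk: "P (Suc m) = {x @ [0] | x. x \<in> P m - q m ` {1..}}
                    \<union> {q m n @ [y] | n y. n \<ge> 1 \<and> y \<in> {0..rad m n}}"
    using constr_step[OF c m1] by (elim conjE) assumption
  have Lk: "L (Suc m) = {x @ [0] | x. x \<in> L m} \<union> {q m n @ [rad m n] | n. n \<ge> 1}"
    using constr_step[OF c m1] by (elim conjE) assumption

  have rp: "0 < rad m n" for n unfolding rad_def by simp
  have "x' @ [0] \<in> P (Suc m)"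
  proof (cases "x' \<in> q m ` {1..}")
    case True
    then obtain n where n: "n \<ge> 1" "x' = q m n" by auto
    have "(0::real) \<in> {0..rad m n}" using rp[of n] by simp
    then show ?thesis unfolding Pk n(2) using n(1)
      by (intro UnI2 CollectI) (rule exI[of _ n], rule exI[of _ 0], simp)
  next
    case False
    then have "x' \<in> P m - q m ` {1..}" using x' by simp
    then show ?thesis unfolding Pk by (intro UnI1 CollectI) (rule exI[of _ x'], rule conjI[OF refl])
  qed
  moreover have "x' @ [0] \<notin> L (Suc m)"
  proof
    assume "x' @ [0] \<in> L (Suc m)"
    then have "(\<exists>y. x' @ [0] = y @ [0] \<and> y \<in> L m) \<or> (\<exists>n. x' @ [0] = q m n @ [rad m n] \<and> n \<ge> 1)"
      unfolding Lk by (simp only: Un_iff mem_Collect_eq)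
    then show False
    proof
      assume "\<exists>y. x' @ [0] = y @ [0] \<and> y \<in> L m"
      then show False using x' by auto
    next
      assume "\<exists>n. x' @ [0] = q m n @ [rad m n] \<and> n \<ge> 1"
      then obtain n where "x' @ [0] = q m n @ [rad m n]" by blast
      then have "rad m n = 0" by simp
      then show False using rp[of n] by simp
    qed
  qed
  ultimately show ?case using x'(2) embed_snoc0[of x'] by (intro bexI[of _ "x' @ [0]"]) auto
qed

theorem proposition4p10:
  fixes \<gamma> :: "real \<Rightarrow> nat \<Rightarrow> real"
    and P L :: "nat \<Rightarrow> real list set"
    and \<rho> :: "nat \<Rightarrow> real list \<Rightarrow> real list \<Rightarrow> real"
    and q :: "nat \<Rightarrow> nat \<Rightarrow> real list"
    and C :: "'c set" and dC :: "'c \<Rightarrow> 'c \<Rightarrow> real" and j :: "(nat \<Rightarrow> real) \<Rightarrow> 'c"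
  assumes "admissible_curve \<gamma>"
    and "construction \<gamma> P \<rho> L q"
    and "is_completion P \<rho> C dC j"
  shows "(Metric_space.mtopology C dC) closure_of (j ` L_inf L) = C"
proof -
  note c = assms(2)
  have ms: "Metric_space C dC" and jP: "j ` Pcal_inf P \<subseteq> C"
    and iso: "\<And>k a b. k \<ge> 1 \<Longrightarrow> a \<in> P k \<Longrightarrow> b \<in> P k \<Longrightarrow> dC (j (embed a)) (j (embed b)) = \<rho> k a b"
    and dense: "(Metric_space.mtopology C dC) closure_of (j ` Pcal_inf P) = C"
    using assms(3) unfolding is_completion_def by auto
  interpret M: Metric_space C dC by (rule ms)
  have g0: "\<gamma> 0 = (\<lambda>i. 0)" and g1: "\<gamma> 1 = xinf"
    using assms(1) unfolding admissible_curve_def by auto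
  have inC: "j (embed a) \<in> C" if "k \<ge> 1" "a \<in> P k" for k a
    using jP that unfolding Pcal_inf_def by auto
  have LsubP: "L_inf L \<subseteq> Pcal_inf P"
    using L_sub_P[OF c] unfolding L_inf_def Pcal_inf_def by blast
  have key: "z \<in> M.mtopology closure_of (j ` L_inf L)" if z: "z \<in> j ` Pcal_inf P" for z
  proof -
    obtain k x where k: "k \<ge> 1" and x: "x \<in> P k" and zx: "z = j (embed x)"
      using z unfolding Pcal_inf_def by auto
    show ?thesis
    proof (cases "x \<in> L k")
      case True
      then have "z \<in> j ` L_inf L" using k zx unfolding L_inf_def by auto
      moreover have "j ` L_inf L \<subseteq> topspace M.mtopology"
        using LsubP jP by auto
      ultimately show ?thesis using closure_of_subset by blast
    next
      case False
      show ?thesis unfolding M.metric_closure_of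
      proof (safe)
        show "z \<in> C" using inC k x zx by auto
      next
        fix r :: real assume r: "r > 0"
        obtain m0 where m0: "(1/2::real)^m0 < r" using real_arch_pow_inv[of r "1/2"] r by auto
        define m where "m = max m0 k"
        have mk: "m \<ge> k" and m1: "m \<ge> 1" using k unfolding m_def by auto
        have pm: "(1/2::real)^m < r"
        proof -
          have "(1/2::real)^m \<le> (1/2)^m0" by (rule power_decreasing) (auto simp: m_def)
          then show ?thesis using m0 by linarith
        qed
        obtain x' where x': "x' \<in> P m - L m" "embed x' = embed x"
          using lift[OF c k mk] x False by blast
        have C1: "(\<forall>x\<in>P m - L m. \<forall>\<epsilon>>0. \<exists>n\<ge>1. \<rho> m x (q m n) < \<epsilon>)"
    using constr_step[OF c m1] by (elim conjE) assumption
  have qP: "q m ` {1..} \<subseteq> P m - L m"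
    using constr_step[OF c m1] by (elim conjE) assumption
  have Pk: "P (Suc m) = {x @ [0] | x. x \<in> P m - q m ` {1..}}
                    \<union> {q m n @ [y] | n y. n \<ge> 1 \<and> y \<in> {0..rad m n}}"
    using constr_step[OF c m1] by (elim conjE) assumption
  have Lk: "L (Suc m) = {x @ [0] | x. x \<in> L m} \<union> {q m n @ [rad m n] | n. n \<ge> 1}"
    using constr_step[OF c m1] by (elim conjE) assumption
  have rho: "(\<forall>n\<ge>1. \<forall>m'\<ge>1. \<forall>y1\<in>{0..rad m n}. \<forall>y2\<in>{0..rad m m'}.
           \<rho> (Suc m) (q m n @ [y1]) (q m m' @ [y2]) =
             (if n = m' then theta_r \<gamma> (rad m n) y1 y2
              else theta_r \<gamma> (rad m n) y1 0 + \<rho> m (q m n) (q m m') + theta_r \<gamma> (rad m m') 0 y2))"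
    using constr_step[OF c m1] by (elim conjE) assumption

        obtain n where n: "n \<ge> 1" "\<rho> m x' (q m n) < r/2"
          using C1 x'(1) r by (meson half_gt_zero)
        define R where "R = rad m n"
        have R: "0 < R" "R \<le> (1/2)^m" unfolding R_def rad_def
          by (auto intro: power_decreasing)
        have qn: "q m n \<in> P m" using qP n by auto
        have l0: "q m n @ [0] \<in> P (Suc m)" using Pk n R unfolding R_def by force
        have lR: "q m n @ [R] \<in> P (Suc m)" using Pk n R unfolding R_def by force
        have lL: "q m n @ [R] \<in> L (Suc m)" using Lk n unfolding R_def by blast
        have d2: "\<rho> (Suc m) (q m n @ [0]) (q m n @ [R]) = R / 2"
        proof -
          have "\<rho> (Suc m) (q m n @ [0]) (q m n @ [R]) = theta_r \<gamma> R 0 R"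
            using rho n R unfolding R_def by auto
          also have "\<dots> = R * theta (\<gamma> 0) (\<gamma> 1)" unfolding theta_r_def using R by simp
          also have "\<dots> = R / 2" using g0 g1 theta_zero_xinf by simp
          finally show ?thesis .
        qed
        define y where "y = j (embed (q m n @ [R]))"
        have yL: "y \<in> j ` L_inf L" unfolding y_def L_inf_def using lL m1 by auto
        have ex: "j (embed x') \<in> C" using inC[of m x'] x' m1 by auto
        have eq: "j (embed (q m n)) \<in> C" using inC[OF m1 qn] .
        have ey: "y \<in> C" unfolding y_def using inC[OF _ lR] by simp
        have "dC z y \<le> dC (j (embed x')) (j (embed (q m n))) + dC (j (embed (q m n))) y"
          using M.triangle[OF ex eq ey] zx x'(2) by simp
        also have "dC (j (embed x')) (j (embed (q m n))) = \<rho> m x' (q m n)"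
          using iso[OF m1 _ qn, of x'] x'(1) by blast
        also have "dC (j (embed (q m n))) y = R / 2"
          using iso[of "Suc m", OF _ l0 lR] d2 embed_snoc0[of "q m n"] unfolding y_def by simp
        finally have "dC z y < r" using n(2) R pm by linarith
        then show "\<exists>y\<in>j ` L_inf L. y \<in> M.mball z r"
          using yL ey inC[OF k x] zx unfolding M.in_mball by blast
      qed
    qed
  qed
  have "C \<subseteq> M.mtopology closure_of (j ` L_inf L)"
  proof -
    have "j ` Pcal_inf P \<subseteq> M.mtopology closure_of (j ` L_inf L)" using key by blast
    then have "M.mtopology closure_of (j ` Pcal_inf P) \<subseteq> M.mtopology closure_of (M.mtopology closure_of (j ` L_inf L))"
      by (rule closure_of_mono)
    then have "M.mtopology closure_of (j ` Pcal_inf P) \<subseteq> M.mtopology closure_of (j ` L_inf L)"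
      by (simp only: closure_of_closure_of)
    then show ?thesis using dense by simp
  qed
  moreover have "M.mtopology closure_of (j ` L_inf L) \<subseteq> C"
    using closure_of_subset_topspace[of M.mtopology] M.topspace_mtopology by simp
  ultimately show ?thesis by blast
qed

end
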